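(* Let $(\Omega,\mathcal{F},\mathbf{P})$ be a probability space with $\sigma$-fields $\{\emptyset,\Omega\}=\mathcal{F}_0\subseteq\mathcal{F}_1\subseteq\cdots\subseteq\mathcal{F}_n\subseteq\mathcal{F}$, and let $(\xi_i,\mathcal{F}_i)_{i=1,\dots,n}$ be a sequence of supermartingale differences, i.e. each $\xi_i$ is real-valued, $\mathcal{F}_i$-measurable, integrable, and $\mathbf{E}(\xi_i\mid\mathcal{F}_{i-1})\le 0$. Let $\beta\in(1,2)$ be a constant and assume $\mathbf{E}|\xi_i|^\beta<\infty$ for all $i\in[1,n]$. Let $S_k=\sum_{i=1}^k\xi_i$ and \[ \mathrm{G}^0_k(\beta)=\sum_{i=1}^k\Big(\mathbf{E}\big((\xi_i^-)^\beta\mid\mathcal{F}_{i-1}\big)+(\xi_i^+)^\beta\Big),\qquad k\in[1,n], \] where $x^+=\max\{x,0\}$ and $x^-=-\min\{x,0\}$. Then for all $x,v>0$, \[ \mathbf{P}\Big(S_k\ge x\ \text{and}\ \mathrm{G}^0_k(\beta)\le v^\beta\ \text{for some}\ k\in[1,n]\Big)\le\exp\left\{-C(\beta)\left(\frac{x}{v}\right)^{\frac{\beta}{\beta-1}}\right\}, \] where $C(\beta)=\beta^{\frac{1}{1-\beta}}\left(1-\beta^{-1}\right)$. *)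

theory Defs
  imports "HOL-Probability.Probability"
begin

definition C_const :: "real \<Rightarrow> real" where
  "C_const \<beta> = \<beta> powr (1 / (1 - \<beta>)) * (1 - 1 / \<beta>)"

definition pos_part :: "real \<Rightarrow> real" where
  "pos_part t = max t 0"

definition neg_part :: "real \<Rightarrow> real" where
  "neg_part t = - min t 0"

definition G0 :: "'a measure \<Rightarrow> (nat \<Rightarrow> 'a measure) \<Rightarrow> (nat \<Rightarrow> 'a \<Rightarrow> real) \<Rightarrow> real \<Rightarrow> nat \<Rightarrow> 'a \<Rightarrow> real" where
  "G0 M F \<xi> \<beta> k \<omega> = (\<Sum>i=1..k.
      real_cond_exp M (F (i - 1)) (\<lambda>\<omega>'. neg_part (\<xi> i \<omega>') powr \<beta>) \<omega>
      + pos_part (\<xi> i \<omega>) powr \<beta>)"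

end

theory Submission
  imports Defs
begin


lemma powr_ge_self_aux:
  fixes y b :: real assumes "0 < y" "y < 1" "0 \<le> b" "b \<le> 1"
  shows "y \<le> y powr b"
  using assms powr_mono2' [of b y 1] by (smt (verit) powr_le_cancel_iff powr_one_eq_one powr_mono' powr_one)

lemma scal_pos:
  fixes \<beta> s :: real assumes "1 < \<beta>" "\<beta> \<le> 2" "0 \<le> s"
  shows "exp (s - s powr \<beta> / \<beta>) \<le> 1 + s"
proof -
  define h where "h = (\<lambda>y::real. ln (1 + y) - y + y powr \<beta> / \<beta>)"
  have "h 0 \<le> h s"
  proof (rule DERIV_nonneg_imp_increasing_open[OF assms(3)])
    fix y :: real assume y: "0 < y" "y < s"
    have d: "DERIV h y :> (1 / (1 + y) - 1 + \<beta> * y powr (\<beta> - 1) / \<beta>)"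
      unfolding h_def using y by (auto intro!: derivative_eq_intros)
    have "y / (1 + y) \<le> y powr (\<beta> - 1)"
    proof (cases "y < 1")
      case True
      have "y / (1+y) \<le> y" using y by (simp add: divide_le_eq)
      also have "\<dots> \<le> y powr (\<beta> - 1)" using powr_ge_self_aux[of y "\<beta>-1"] True y assms by simp
      finally show ?thesis .
    next
      case False
      have "y / (1+y) \<le> 1" using y by simp
      also have "\<dots> \<le> y powr (\<beta> - 1)" using False assms by (simp add: ge_one_powr_ge_zero)
      finally show ?thesis .
    qed
    moreover have "1 / (1 + y) - 1 = - (y / (1+y))" using y by (simp add: field_simps)
    ultimately have "0 \<le> 1 / (1 + y) - 1 + \<beta> * y powr (\<beta> - 1) / \<beta>" using assms by simp
    with d show "\<exists>d. DERIV h y :> d \<and> 0 \<le> d" by blast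
  next
    show "continuous_on {0..s} h" unfolding h_def using assms
      by (intro continuous_intros continuous_on_powr') auto
  qed
  hence "s - s powr \<beta> / \<beta> \<le> ln (1 + s)" unfolding h_def by simp
  hence "exp (s - s powr \<beta> / \<beta>) \<le> exp (ln (1+s))" by simp
  thus ?thesis using assms by simp
qed

lemma scal_neg:
  fixes \<beta> t :: real assumes "1 < \<beta>" "\<beta> \<le> 2" "0 \<le> t"
  shows "exp (- t) \<le> 1 - t + t powr \<beta> / \<beta>"
proof -
  define g where "g = (\<lambda>y::real. 1 - y + y powr \<beta> / \<beta> - exp (- y))"
  have "g 0 \<le> g t"
  proof (rule DERIV_nonneg_imp_increasing_open[OF assms(3)])
    fix y :: real assume y: "0 < y" "y < t"
    have d: "DERIV g y :> (- 1 + \<beta> * y powr (\<beta> - 1) / \<beta> + exp (- y))"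
      unfolding g_def using y by (auto intro!: derivative_eq_intros)
    have "1 - exp (-y) \<le> y powr (\<beta> - 1)"
    proof (cases "y < 1")
      case True
      have "1 - exp (-y) \<le> y" using exp_ge_add_one_self[of "-y"] by simp
      also have "\<dots> \<le> y powr (\<beta> - 1)" using powr_ge_self_aux[of y "\<beta>-1"] True y assms by simp
      finally show ?thesis .
    next
      case False
      have "1 - exp (-y) \<le> 1" by simp
      also have "\<dots> \<le> y powr (\<beta> - 1)" using False assms by (simp add: ge_one_powr_ge_zero)
      finally show ?thesis .
    qed
    hence "0 \<le> - 1 + \<beta> * y powr (\<beta> - 1) / \<beta> + exp (- y)" using assms by simp
    with d show "\<exists>d. DERIV g y :> d \<and> 0 \<le> d" by blast
  next
    show "continuous_on {0..t} g" unfolding g_def using assms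
      by (intro continuous_intros continuous_on_powr') auto
  qed
  thus ?thesis unfolding g_def by simp
qed



lemma scal_comb:
  fixes \<beta> l t :: real assumes "1 < \<beta>" "\<beta> \<le> 2" "0 < l"
  shows "exp (l * t - l powr \<beta> / \<beta> * pos_part t powr \<beta>) \<le> 1 + l * t + l powr \<beta> / \<beta> * neg_part t powr \<beta>"
proof (cases "0 \<le> t")
  case True
  have "l powr \<beta> / \<beta> * pos_part t powr \<beta> = (l * t) powr \<beta> / \<beta>"
    using True assms by (simp add: pos_part_def powr_mult)
  moreover have "neg_part t = 0" using True by (simp add: neg_part_def)
  ultimately show ?thesis using scal_pos[of \<beta> "l*t"] assms True by simp
next
  case False
  have "l powr \<beta> / \<beta> * neg_part t powr \<beta> = (- (l * t)) powr \<beta> / \<beta>"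
    using False assms powr_mult[of l "-t" \<beta>] by (simp add: neg_part_def)
  moreover have "pos_part t = 0" using False by (simp add: pos_part_def)
  moreover have "l * t \<le> 0" using False assms by (simp add: mult_nonneg_nonpos)
  ultimately show ?thesis using scal_neg[of \<beta> "- (l*t)"] assms False by simp
qed

lemma key:
  fixes M G :: "'a measure" and f :: "'a \<Rightarrow> real" and H :: "'a \<Rightarrow> ennreal"
  assumes prob: "prob_space M" and sub: "subalgebra M G"
    and fm[measurable]: "f \<in> borel_measurable M"
    and fi: "integrable M f" and fbi: "integrable M (\<lambda>\<omega>. \<bar>f \<omega>\<bar> powr \<beta>)"
    and sm: "AE \<omega> in M. real_cond_exp M G f \<omega> \<le> 0"
    and Hm[measurable]: "H \<in> borel_measurable G"
    and b: "1 < \<beta>" "\<beta> \<le> 2" and l: "0 < l"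
  shows "(\<integral>\<^sup>+\<omega>. H \<omega> * ennreal (exp (l * f \<omega> - l powr \<beta> / \<beta> * (pos_part (f \<omega>) powr \<beta>
            + real_cond_exp M G (\<lambda>\<omega>. neg_part (f \<omega>) powr \<beta>) \<omega>))) \<partial>M) \<le> (\<integral>\<^sup>+\<omega>. H \<omega> \<partial>M)"
proof -
  interpret P: prob_space M by (rule prob)
  interpret finite_measure_subalgebra M G
    by unfold_locales (rule sub)
  define c where "c = l powr \<beta> / \<beta>"
  have c: "0 < c" unfolding c_def using b l by simp
  define g where "g = (\<lambda>\<omega>. neg_part (f \<omega>) powr \<beta>)"
  define E where "E = real_cond_exp M G g"
  define U where "U = (\<lambda>\<omega>. 1 + l * f \<omega> + c * g \<omega>)"
  have gm[measurable]: "g \<in> borel_measurable M" unfolding g_def neg_part_def by measurable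
  have gi: "integrable M g"
  proof (rule Bochner_Integration.integrable_bound[OF fbi])
    show "g \<in> borel_measurable M" by (rule gm)
    show "AE x in M. norm (g x) \<le> norm (\<bar>f x\<bar> powr \<beta>)"
      by (auto simp: g_def neg_part_def min_def)
  qed
  have Hm'[measurable]: "H \<in> borel_measurable M" using Hm measurable_from_subalg[OF sub] by blast
  have Em[measurable]: "E \<in> borel_measurable G" "E \<in> borel_measurable M" unfolding E_def by auto
  have Um[measurable]: "U \<in> borel_measurable M" unfolding U_def by measurable
  have Ui: "integrable M U" unfolding U_def using fi gi by auto
  have Upos: "\<And>\<omega>. 0 \<le> U \<omega>"
  proof -
    fix \<omega> show "0 \<le> U \<omega>"
      using scal_comb[OF b l, of "f \<omega>"] unfolding U_def c_def g_def
      by (smt (verit) exp_gt_zero)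
  qed
  have rU: "AE \<omega> in M. real_cond_exp M G U \<omega> \<le> 1 + c * E \<omega>"
  proof -
    have a1: "AE \<omega> in M. real_cond_exp M G U \<omega> = real_cond_exp M G (\<lambda>\<omega>. 1 + l * f \<omega>) \<omega> + real_cond_exp M G (\<lambda>\<omega>. c * g \<omega>) \<omega>"
      unfolding U_def using fi gi by (intro real_cond_exp_add) auto
    have a2: "AE \<omega> in M. real_cond_exp M G (\<lambda>\<omega>. 1 + l * f \<omega>) \<omega> = real_cond_exp M G (\<lambda>\<omega>. 1) \<omega> + real_cond_exp M G (\<lambda>\<omega>. l * f \<omega>) \<omega>"
      using fi by (intro real_cond_exp_add) auto
    have a3: "AE \<omega> in M. real_cond_exp M G (\<lambda>\<omega>. 1) \<omega> = 1"
      by (intro real_cond_exp_F_meas) auto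
    have a4: "AE \<omega> in M. real_cond_exp M G (\<lambda>\<omega>. l * f \<omega>) \<omega> = l * real_cond_exp M G f \<omega>"
      using fi by auto
    have a5: "AE \<omega> in M. real_cond_exp M G (\<lambda>\<omega>. c * g \<omega>) \<omega> = c * E \<omega>"
      unfolding E_def using gi by auto
    show ?thesis using a1 a2 a3 a4 a5 sm
    proof eventually_elim
      case (elim \<omega>) thus ?case using l by (simp add: mult_nonneg_nonpos)
    qed
  qed
  have nU: "AE \<omega> in M. nn_cond_exp M G (\<lambda>\<omega>. ennreal (U \<omega>)) \<omega> = ennreal (real_cond_exp M G U \<omega>)"
  proof -
    have "AE \<omega> in M. ennreal (real_cond_exp M G U \<omega>) = nn_cond_exp M G (\<lambda>\<omega>. ennreal (U \<omega>)) \<omega>"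
    proof (rule nn_cond_exp_charact)
      fix A assume A: "A \<in> sets G"
      hence AM: "A \<in> sets M" using sub by (auto simp: subalgebra_def)
      have rpos: "AE \<omega> in M. 0 \<le> real_cond_exp M G U \<omega>"
        using Upos by (intro real_cond_exp_pos) auto
      have iA1: "integrable M (\<lambda>\<omega>. indicator A \<omega> * U \<omega>)"
        using integrable_mult_indicator[OF AM Ui] by simp
      have iA2: "integrable M (\<lambda>\<omega>. indicator A \<omega> * real_cond_exp M G U \<omega>)"
        using integrable_mult_indicator[OF AM real_cond_exp_int(1)[OF Ui]] by simp
      have "(\<integral>\<^sup>+\<omega>\<in>A. ennreal (U \<omega>) \<partial>M) = (\<integral>\<^sup>+\<omega>. ennreal (indicator A \<omega> * U \<omega>) \<partial>M)"
        by (intro nn_integral_cong) (auto simp: indicator_def)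
      also have "\<dots> = ennreal (\<integral>\<omega>. indicator A \<omega> * U \<omega> \<partial>M)"
        using iA1 Upos by (intro nn_integral_eq_integral) auto
      also have "(\<integral>\<omega>. indicator A \<omega> * U \<omega> \<partial>M) = (\<integral>\<omega>. indicator A \<omega> * real_cond_exp M G U \<omega> \<partial>M)"
        using real_cond_exp_intA[OF Ui A] unfolding set_lebesgue_integral_def by simp
      also have "ennreal \<dots> = (\<integral>\<^sup>+\<omega>. ennreal (indicator A \<omega> * real_cond_exp M G U \<omega>) \<partial>M)"
        using iA2 rpos by (intro nn_integral_eq_integral[symmetric]) (auto simp: indicator_def)
      also have "\<dots> = (\<integral>\<^sup>+\<omega>\<in>A. ennreal (real_cond_exp M G U \<omega>) \<partial>M)"
        by (intro nn_integral_cong) (auto simp: indicator_def)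
      finally show "(\<integral>\<^sup>+\<omega>\<in>A. ennreal (U \<omega>) \<partial>M) = (\<integral>\<^sup>+\<omega>\<in>A. ennreal (real_cond_exp M G U \<omega>) \<partial>M)" .
    qed auto
    thus ?thesis by (auto elim: AE_mp)
  qed
  define K where "K = (\<lambda>\<omega>. H \<omega> * ennreal (exp (- c * E \<omega>)))"
  have Km[measurable]: "K \<in> borel_measurable G" unfolding K_def by measurable
  have "(\<integral>\<^sup>+\<omega>. H \<omega> * ennreal (exp (l * f \<omega> - c * (pos_part (f \<omega>) powr \<beta> + E \<omega>))) \<partial>M)
        \<le> (\<integral>\<^sup>+\<omega>. K \<omega> * ennreal (U \<omega>) \<partial>M)"
  proof (intro nn_integral_mono)
    fix \<omega>
    have "exp (l * f \<omega> - c * (pos_part (f \<omega>) powr \<beta> + E \<omega>))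
        = exp (l * f \<omega> - c * pos_part (f \<omega>) powr \<beta>) * exp (- c * E \<omega>)"
      by (simp add: exp_add[symmetric] algebra_simps)
    also have "\<dots> \<le> U \<omega> * exp (- c * E \<omega>)"
      using scal_comb[OF b l, of "f \<omega>"] unfolding U_def c_def g_def
      by (intro mult_right_mono) auto
    finally have "ennreal (exp (l * f \<omega> - c * (pos_part (f \<omega>) powr \<beta> + E \<omega>))) \<le> ennreal (exp (- c * E \<omega>)) * ennreal (U \<omega>)"
      using Upos by (simp add: ennreal_mult[symmetric] mult.commute)
    thus "H \<omega> * ennreal (exp (l * f \<omega> - c * (pos_part (f \<omega>) powr \<beta> + E \<omega>))) \<le> K \<omega> * ennreal (U \<omega>)"
      unfolding K_def by (metis mult.assoc mult_left_mono zero_le)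
  qed
  also have "\<dots> = (\<integral>\<^sup>+\<omega>. K \<omega> * nn_cond_exp M G (\<lambda>\<omega>. ennreal (U \<omega>)) \<omega> \<partial>M)"
    by (rule nn_cond_exp_intg[symmetric]) auto
  also have "\<dots> \<le> (\<integral>\<^sup>+\<omega>. H \<omega> \<partial>M)"
  proof (intro nn_integral_mono_AE)
    show "AE \<omega> in M. K \<omega> * nn_cond_exp M G (\<lambda>\<omega>. ennreal (U \<omega>)) \<omega> \<le> H \<omega>"
      using nU rU
    proof eventually_elim
      case (elim \<omega>)
      have "exp (- c * E \<omega>) * max 0 (1 + c * E \<omega>) \<le> 1"
      proof (cases "0 \<le> 1 + c * E \<omega>")
        case True
        have "1 + c * E \<omega> \<le> exp (c * E \<omega>)" by (rule exp_ge_add_one_self)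
        hence "exp (- c * E \<omega>) * (1 + c * E \<omega>) \<le> exp (- c * E \<omega>) * exp (c * E \<omega>)"
          by (intro mult_left_mono) auto
        also have "\<dots> = 1" by (simp add: exp_add[symmetric])
        finally show ?thesis using True by simp
      qed auto
      have "nn_cond_exp M G (\<lambda>\<omega>. ennreal (U \<omega>)) \<omega> \<le> ennreal (max 0 (1 + c * E \<omega>))"
        using elim by (auto intro: ennreal_leI)
      hence "K \<omega> * nn_cond_exp M G (\<lambda>\<omega>. ennreal (U \<omega>)) \<omega> \<le> H \<omega> * (ennreal (exp (- c * E \<omega>)) * ennreal (max 0 (1 + c * E \<omega>)))"
        unfolding K_def by (metis mult.assoc mult_left_mono zero_le)
      also have "\<dots> = H \<omega> * ennreal (exp (- c * E \<omega>) * max 0 (1 + c * E \<omega>))"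
        by (simp add: ennreal_mult)
      also have "\<dots> \<le> H \<omega> * 1"
        using \<open>exp (- c * E \<omega>) * max 0 (1 + c * E \<omega>) \<le> 1\<close>
        by (intro mult_left_mono) (auto simp: ennreal_le_1)
      finally show ?case by simp
    qed
  qed
  finally show ?thesis unfolding c_def E_def g_def .
qed


lemma theta_calc:
  fixes \<beta> x v :: real
  assumes b: "1 < \<beta>" and x: "0 < x" and v: "0 < v"
  shows "(x / v powr \<beta>) powr (1/(\<beta>-1)) * x - ((x / v powr \<beta>) powr (1/(\<beta>-1))) powr \<beta> / \<beta> * v powr \<beta>
     = (1 - 1/\<beta>) * (x/v) powr (\<beta>/(\<beta>-1))"
proof -
  define p where "p = 1/(\<beta>-1)"
  define q where "q = x / v powr \<beta>"
  have q: "0 < q" unfolding q_def using x v by simp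
  have pb: "p * \<beta> = p + 1" unfolding p_def using b by (simp add: field_simps)
  have p1: "p * (\<beta> - 1) = 1" unfolding p_def using b by simp
  have "(q powr p) powr \<beta> = q powr p * q" 
    using q by (simp add: powr_powr pb powr_add)
  hence A: "(q powr p) powr \<beta> * v powr \<beta> = q powr p * x"
    unfolding q_def using v by simp
  have B: "q powr p * x = (x/v) powr (\<beta>/(\<beta>-1))"
  proof -
    have "q powr p = x powr p / v powr (\<beta> * p)" unfolding q_def using x v
      by (simp add: powr_divide powr_powr)
    hence "q powr p * x = x powr (p + 1) / v powr (p * \<beta>)"
      using x by (simp add: powr_add mult.commute)
    also have "\<dots> = x powr (\<beta>/(\<beta>-1)) / v powr (\<beta>/(\<beta>-1))"
      using pb unfolding p_def using b by (simp add: field_simps)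
    also have "\<dots> = (x/v) powr (\<beta>/(\<beta>-1))" using x v by (simp add: powr_divide)
    finally show ?thesis .
  qed
  have "q powr p * x - (q powr p) powr \<beta> / \<beta> * v powr \<beta> = (1 - 1/\<beta>) * (q powr p * x)"
    using A b by (simp add: field_simps)
  thus ?thesis using B unfolding p_def q_def by simp
qed

lemma C_le: "1 < \<beta> \<Longrightarrow> C_const \<beta> \<le> 1 - 1/\<beta>"
proof -
  assume b: "1 < \<beta>"
  have "\<beta> powr (1 / (1 - \<beta>)) \<le> \<beta> powr 0"
    using b by (intro powr_mono) (auto simp: divide_nonpos_neg)
  moreover have "0 \<le> 1 - 1/\<beta>" using b by simp
  ultimately show ?thesis unfolding C_const_def using b by (simp add: mult_right_le_one_le)
qed


lemma ball_Suc_split: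
  "(\<forall>j\<in>{1..Suc m}. \<not> C j (w::'a)) \<longleftrightarrow> (\<forall>j\<in>{1..m}. \<not> C j w) \<and> \<not> C (Suc m) w"
  by (auto simp add: atLeastAtMostSuc_conv)

theorem theorem2p2:
  fixes M :: "'a measure" and F :: "nat \<Rightarrow> 'a measure" and \<xi> :: "nat \<Rightarrow> 'a \<Rightarrow> real"
    and n :: nat and \<beta> x v :: real
  assumes prob: "prob_space M"
    and subalg: "\<And>i. i \<le> n \<Longrightarrow> subalgebra M (F i)"
    and F0: "sets (F 0) = {{}, space M}"
    and mono: "\<And>i. i < n \<Longrightarrow> sets (F i) \<subseteq> sets (F (Suc i))"
    and meas: "\<And>i. 1 \<le> i \<Longrightarrow> i \<le> n \<Longrightarrow> \<xi> i \<in> borel_measurable (F i)"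
    and integ: "\<And>i. 1 \<le> i \<Longrightarrow> i \<le> n \<Longrightarrow> integrable M (\<xi> i)"
    and supmart: "\<And>i. 1 \<le> i \<Longrightarrow> i \<le> n \<Longrightarrow>
        AE \<omega> in M. real_cond_exp M (F (i - 1)) (\<xi> i) \<omega> \<le> 0"
    and beta: "1 < \<beta>" "\<beta> < 2"
    and mom: "\<And>i. 1 \<le> i \<Longrightarrow> i \<le> n \<Longrightarrow> integrable M (\<lambda>\<omega>. \<bar>\<xi> i \<omega>\<bar> powr \<beta>)"
    and xpos: "0 < x" and vpos: "0 < v"
  shows "measure M {\<omega> \<in> space M. \<exists>k\<in>{1..n}.
            (\<Sum>i=1..k. \<xi> i \<omega>) \<ge> x \<and> G0 M F \<xi> \<beta> k \<omega> \<le> v powr \<beta>}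
         \<le> exp (- C_const \<beta> * (x / v) powr (\<beta> / (\<beta> - 1)))"
proof -
  interpret P: prob_space M by (rule prob)
  have chain: "sets (F a) \<subseteq> sets (F b)" if "a \<le> b" "b \<le> n" for a b
    using that
  proof (induction b)
    case 0 thus ?case by simp
  next
    case (Suc b)
    show ?case
    proof (cases "a = Suc b")
      case False
      hence "sets (F a) \<subseteq> sets (F b)" using Suc by simp
      also have "\<dots> \<subseteq> sets (F (Suc b))" using mono Suc by simp
      finally show ?thesis .
    qed simp
  qed
  have spF: "space (F a) = space M" if "a \<le> n" for a
    using subalg[OF that] by (simp add: subalgebra_def)
  have subF: "subalgebra (F b) (F a)" if "a \<le> b" "b \<le> n" for a b
    using chain[OF that] spF that by (simp add: subalgebra_def)
  have lift: "h \<in> borel_measurable (F b)" if "a \<le> b" "b \<le> n" "h \<in> borel_measurable (F a)" for a b and h :: "'a \<Rightarrow> real"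
    using measurable_from_subalg[OF subF[OF that(1,2)] that(3)] .
  have toM: "h \<in> borel_measurable M" if "a \<le> n" "h \<in> borel_measurable (F a)" for a and h :: "'a \<Rightarrow> real"
    using measurable_from_subalg[OF subalg[OF that(1)] that(2)] .
  define S where "S = (\<lambda>k \<omega>. \<Sum>i=1..k. \<xi> i \<omega>)"
  define G where "G = G0 M F \<xi> \<beta>"
  have measS: "S k \<in> borel_measurable (F m)" if "k \<le> m" "m \<le> n" for k m
    unfolding S_def
  proof (intro borel_measurable_sum)
    fix i assume "i \<in> {1..k}"
    thus "\<xi> i \<in> borel_measurable (F m)" using that lift[of i m "\<xi> i"] meas[of i] by auto
  qed
  have measG: "G k \<in> borel_measurable (F m)" if "k \<le> m" "m \<le> n" for k m
  proof -
    have "(\<lambda>\<omega>. real_cond_exp M (F (i - 1)) (\<lambda>\<omega>'. neg_part (\<xi> i \<omega>') powr \<beta>) \<omega>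
      + pos_part (\<xi> i \<omega>) powr \<beta>) \<in> borel_measurable (F m)" if "i \<in> {1..k}" for i
    proof -
      have m1: "real_cond_exp M (F (i - 1)) (\<lambda>\<omega>'. neg_part (\<xi> i \<omega>') powr \<beta>) \<in> borel_measurable (F m)"
      proof -
        have "i - 1 \<le> m" using that \<open>k \<le> m\<close> by auto
        thus ?thesis using \<open>m \<le> n\<close> lift[of "i - 1" m "real_cond_exp M (F (i - 1)) (\<lambda>\<omega>'. neg_part (\<xi> i \<omega>') powr \<beta>)"]
          borel_measurable_cond_exp[of M "F (i - 1)" "\<lambda>\<omega>'. neg_part (\<xi> i \<omega>') powr \<beta>"] by blast
      qed
      have [measurable]: "\<xi> i \<in> borel_measurable (F m)"
        using \<open>k \<le> m\<close> \<open>m \<le> n\<close> that lift[of i m "\<xi> i"] meas[of i] by simp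
      have m2: "(\<lambda>\<omega>. pos_part (\<xi> i \<omega>) powr \<beta>) \<in> borel_measurable (F m)"
        unfolding pos_part_def by measurable
      show ?thesis using m1 m2 by (rule borel_measurable_add)
    qed
    thus ?thesis unfolding G_def G0_def by (rule borel_measurable_sum)
  qed
  define l where "l = (x / v powr \<beta>) powr (1 / (\<beta> - 1))"
  define c where "c = l powr \<beta> / \<beta>"
  have lpos: "0 < l" unfolding l_def using xpos vpos by simp
  have cpos: "0 < c" unfolding c_def using lpos beta by simp
  define Z where "Z = (\<lambda>k \<omega>. exp (l * S k \<omega> - c * G k \<omega>))"
  define C where "C = (\<lambda>k \<omega>. x \<le> S k \<omega> \<and> G k \<omega> \<le> v powr \<beta>)"
  define N where "N = (\<lambda>m. {\<omega>\<in>space M. \<forall>j\<in>{1..m}. \<not> C j \<omega>})"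
  define B where "B = (\<lambda>k. {\<omega>\<in>space M. (\<forall>j\<in>{1..k - 1}. \<not> C j \<omega>) \<and> C k \<omega>})"
  have measZ: "Z k \<in> borel_measurable (F m)" if "k \<le> m" "m \<le> n" for k m
  proof -
    have [measurable]: "S k \<in> borel_measurable (F m)" "G k \<in> borel_measurable (F m)"
      using measS measG that by auto
    show ?thesis unfolding Z_def by measurable
  qed
  have predC: "Measurable.pred (F m) (C k)" if "k \<le> m" "m \<le> n" for k m
  proof -
    have [measurable]: "S k \<in> borel_measurable (F m)" "G k \<in> borel_measurable (F m)"
      using measS measG that by auto
    show ?thesis unfolding C_def by measurable
  qed
  have measN: "N m \<in> sets (F m)" if "m \<le> n" for m
  proof -
    have "Measurable.pred (F m) (\<lambda>\<omega>. \<forall>j\<in>{1..m}. \<not> C j \<omega>)"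
      using predC that by (intro pred_intros_finite pred_intros_logic) auto
    hence "{\<omega>\<in>space (F m). \<forall>j\<in>{1..m}. \<not> C j \<omega>} \<in> sets (F m)" by (simp add: pred_def)
    thus ?thesis unfolding N_def using spF that by simp
  qed
  have measB: "B k \<in> sets (F k)" if "k \<le> n" for k
  proof -
    have "Measurable.pred (F k) (\<lambda>\<omega>. (\<forall>j\<in>{1..k - 1}. \<not> C j \<omega>) \<and> C k \<omega>)"
      using predC that by (intro pred_intros_finite pred_intros_logic) auto
    hence "{\<omega>\<in>space (F k). (\<forall>j\<in>{1..k - 1}. \<not> C j \<omega>) \<and> C k \<omega>} \<in> sets (F k)" by (simp add: pred_def)
    thus ?thesis unfolding B_def using spF that by simp
  qed
  have setsM: "A \<in> sets M" if "A \<in> sets (F m)" "m \<le> n" for A m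
    using subalg[OF that(2)] that(1) by (auto simp: subalgebra_def)
  have Z0: "Z 0 \<omega> = 1" for \<omega> unfolding Z_def S_def G_def G0_def by simp
  have Zsuc: "Z (Suc m) \<omega> = Z m \<omega> * exp (l * \<xi> (Suc m) \<omega> - c * (pos_part (\<xi> (Suc m) \<omega>) powr \<beta>
            + real_cond_exp M (F m) (\<lambda>\<omega>'. neg_part (\<xi> (Suc m) \<omega>') powr \<beta>) \<omega>))" for m \<omega>
    unfolding Z_def S_def G_def G0_def by (simp add: exp_add[symmetric] algebra_simps)
  have induct: "(\<Sum>k=1..m. \<integral>\<^sup>+\<omega>. ennreal (Z k \<omega>) * indicator (B k) \<omega> \<partial>M)
      + (\<integral>\<^sup>+\<omega>. ennreal (Z m \<omega>) * indicator (N m) \<omega> \<partial>M) \<le> 1" if "m \<le> n" for m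
    using that
  proof (induction m)
    case 0
    have "N 0 = space M" unfolding N_def by auto
    thus ?case by (simp add: Z0 P.emeasure_space_1)
  next
    case (Suc m)
    have mn: "m < n" using Suc by simp
    have [measurable]: "N m \<in> sets (F m)" using measN mn by simp
    have [measurable]: "Z m \<in> borel_measurable (F m)" using measZ mn by simp
    have [measurable]: "N m \<in> sets M" "N (Suc m) \<in> sets M" "B (Suc m) \<in> sets M"
      using setsM[OF measN[of m]] setsM[OF measN[of "Suc m"]] setsM[OF measB[of "Suc m"]] Suc.prems mn
      by auto
    have [measurable]: "Z (Suc m) \<in> borel_measurable M"
      using toM[OF Suc.prems measZ[OF order.refl Suc.prems]] .
    have [measurable]: "\<xi> (Suc m) \<in> borel_measurable M"
      using toM[OF Suc.prems meas[OF _ Suc.prems]] by simp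
    define Y where "Y = (\<lambda>\<omega>. exp (l * \<xi> (Suc m) \<omega> - l powr \<beta> / \<beta> * (pos_part (\<xi> (Suc m) \<omega>) powr \<beta>
            + real_cond_exp M (F m) (\<lambda>\<omega>'. neg_part (\<xi> (Suc m) \<omega>') powr \<beta>) \<omega>)))"
    have keyapp: "(\<integral>\<^sup>+\<omega>. (ennreal (Z m \<omega>) * indicator (N m) \<omega>) * ennreal (Y \<omega>) \<partial>M)
        \<le> (\<integral>\<^sup>+\<omega>. ennreal (Z m \<omega>) * indicator (N m) \<omega> \<partial>M)"
      unfolding Y_def
    proof (rule key[OF prob subalg])
      show "AE \<omega> in M. real_cond_exp M (F m) (\<xi> (Suc m)) \<omega> \<le> 0"
        using supmart[of "Suc m"] Suc.prems by simp
    qed (use Suc.prems beta lpos integ mom in auto)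
    have split: "(\<integral>\<^sup>+\<omega>. (ennreal (Z m \<omega>) * indicator (N m) \<omega>) * ennreal (Y \<omega>) \<partial>M)
       = (\<integral>\<^sup>+\<omega>. ennreal (Z (Suc m) \<omega>) * indicator (B (Suc m)) \<omega> \<partial>M)
         + (\<integral>\<^sup>+\<omega>. ennreal (Z (Suc m) \<omega>) * indicator (N (Suc m)) \<omega> \<partial>M)"
    proof -
      have "(\<integral>\<^sup>+\<omega>. (ennreal (Z m \<omega>) * indicator (N m) \<omega>) * ennreal (Y \<omega>) \<partial>M)
         = (\<integral>\<^sup>+\<omega>. ennreal (Z (Suc m) \<omega>) * indicator (B (Suc m)) \<omega>
             + ennreal (Z (Suc m) \<omega>) * indicator (N (Suc m)) \<omega> \<partial>M)"
      proof (rule nn_integral_cong)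
        fix \<omega> assume \<omega>: "\<omega> \<in> space M"
        have ZY: "ennreal (Z m \<omega>) * ennreal (Y \<omega>) = ennreal (Z (Suc m) \<omega>)"
          unfolding Zsuc Y_def c_def by (simp add: ennreal_mult Z_def)
        have ind: "indicator (N m) \<omega> = (indicator (B (Suc m)) \<omega> + indicator (N (Suc m)) \<omega> :: ennreal)"
          proof -
          have NS: "N (Suc m) = {\<omega>\<in>space M. (\<forall>j\<in>{1..m}. \<not> C j \<omega>) \<and> \<not> C (Suc m) \<omega>}"
            unfolding N_def by (simp only: ball_Suc_split)
          have BS: "B (Suc m) = {\<omega>\<in>space M. (\<forall>j\<in>{1..m}. \<not> C j \<omega>) \<and> C (Suc m) \<omega>}"
            unfolding B_def by simp
          have Nm: "N m = {\<omega>\<in>space M. \<forall>j\<in>{1..m}. \<not> C j \<omega>}" by (simp add: N_def)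
          show ?thesis using \<omega> unfolding NS BS Nm by (auto simp: indicator_def)
        qed
        show "(ennreal (Z m \<omega>) * indicator (N m) \<omega>) * ennreal (Y \<omega>)
           = ennreal (Z (Suc m) \<omega>) * indicator (B (Suc m)) \<omega> + ennreal (Z (Suc m) \<omega>) * indicator (N (Suc m)) \<omega>"
          unfolding ind ZY[symmetric] by (simp add: algebra_simps)
      qed
      also have "\<dots> = (\<integral>\<^sup>+\<omega>. ennreal (Z (Suc m) \<omega>) * indicator (B (Suc m)) \<omega> \<partial>M)
         + (\<integral>\<^sup>+\<omega>. ennreal (Z (Suc m) \<omega>) * indicator (N (Suc m)) \<omega> \<partial>M)"
        by (rule nn_integral_add) auto
      finally show ?thesis .
    qed
    have "(\<Sum>k=1..Suc m. \<integral>\<^sup>+\<omega>. ennreal (Z k \<omega>) * indicator (B k) \<omega> \<partial>M)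
      + (\<integral>\<^sup>+\<omega>. ennreal (Z (Suc m) \<omega>) * indicator (N (Suc m)) \<omega> \<partial>M)
      = (\<Sum>k=1..m. \<integral>\<^sup>+\<omega>. ennreal (Z k \<omega>) * indicator (B k) \<omega> \<partial>M)
        + (\<integral>\<^sup>+\<omega>. (ennreal (Z m \<omega>) * indicator (N m) \<omega>) * ennreal (Y \<omega>) \<partial>M)"
      unfolding split by (simp add: add.assoc)
    also have "\<dots> \<le> (\<Sum>k=1..m. \<integral>\<^sup>+\<omega>. ennreal (Z k \<omega>) * indicator (B k) \<omega> \<partial>M)
        + (\<integral>\<^sup>+\<omega>. ennreal (Z m \<omega>) * indicator (N m) \<omega> \<partial>M)"
      using keyapp by (rule add_left_mono)
    also have "\<dots> \<le> 1" using Suc by simp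
    finally show ?case .
  qed
  define \<theta> where "\<theta> = l * x - c * v powr \<beta>"
  define E0 where "E0 = {\<omega> \<in> space M. \<exists>k\<in>{1..n}.
            (\<Sum>i=1..k. \<xi> i \<omega>) \<ge> x \<and> G0 M F \<xi> \<beta> k \<omega> \<le> v powr \<beta>}"
  have E0C: "E0 = {\<omega> \<in> space M. \<exists>k\<in>{1..n}. C k \<omega>}"
    unfolding E0_def C_def S_def G_def by simp
  have sumle: "(\<Sum>k=1..n. \<integral>\<^sup>+\<omega>. ennreal (Z k \<omega>) * indicator (B k) \<omega> \<partial>M) \<le> 1"
    using order_trans[OF add_increasing2[OF zero_le order_refl] induct[of n]] by simp
  have bound: "measure M E0 \<le> exp (- \<theta>)"
  proof (cases "E0 \<in> sets M")
    case False thus ?thesis by (simp add: measure_notin_sets)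
  next
    case True
    have mB: "B k \<in> sets M" if "k \<in> {1..n}" for k
    proof -
      have kn: "k \<le> n" using that by simp
      show ?thesis using setsM[OF measB[OF kn] kn] .
    qed
    have mZ: "Z k \<in> borel_measurable M" if "k \<in> {1..n}" for k
    proof -
      have kn: "k \<le> n" using that by simp
      show ?thesis using toM[OF order.refl measZ[OF kn order.refl]] .
    qed
    have mterm: "(\<lambda>\<omega>. ennreal (Z k \<omega>) * indicator (B k) \<omega>) \<in> borel_measurable M" if "k \<in> {1..n}" for k
    proof -
      have [measurable]: "B k \<in> sets M" "Z k \<in> borel_measurable M" using mB mZ that by auto
      show ?thesis by measurable
    qed
    have msum: "(\<lambda>\<omega>. \<Sum>k=1..n. ennreal (Z k \<omega>) * indicator (B k) \<omega>) \<in> borel_measurable M"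
      using mterm by (rule borel_measurable_sum)
    have pw: "indicator E0 \<omega> \<le> ennreal (exp (- \<theta>)) * (\<Sum>k=1..n. ennreal (Z k \<omega>) * indicator (B k) \<omega>)"
      if \<omega>: "\<omega> \<in> space M" for \<omega>
    proof (cases "\<omega> \<in> E0")
      case False thus ?thesis by simp
    next
      case True
      define P where "P = (\<lambda>k. k \<in> {1..n} \<and> C k \<omega>)"
      have ex: "\<exists>k. P k" using True unfolding E0C P_def by auto
      define k0 where "k0 = (LEAST k. P k)"
      have Pk0: "P k0" unfolding k0_def using ex by (meson LeastI_ex)
      have notP: "\<not> C j \<omega>" if "j \<in> {1..k0 - 1}" for j
      proof
        assume "C j \<omega>"
        hence "P j" unfolding P_def using that Pk0 unfolding P_def by auto
        hence "k0 \<le> j" unfolding k0_def by (rule Least_le)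
        thus False using that Pk0 unfolding P_def by auto
      qed
      have k0B: "\<omega> \<in> B k0" unfolding B_def using \<omega> notP Pk0 unfolding P_def by auto
      have k0n: "k0 \<in> {1..n}" using Pk0 unfolding P_def by auto
      have Zge: "exp \<theta> \<le> Z k0 \<omega>"
      proof -
        have "l * x \<le> l * S k0 \<omega>" using Pk0 lpos unfolding P_def C_def by simp
        moreover have "c * G k0 \<omega> \<le> c * v powr \<beta>" using Pk0 cpos unfolding P_def C_def by simp
        ultimately show ?thesis unfolding Z_def \<theta>_def by simp
      qed
      have "ennreal (exp \<theta>) \<le> ennreal (Z k0 \<omega>) * indicator (B k0) \<omega>"
        using Zge k0B by (simp add: ennreal_leI)
      also have "\<dots> \<le> (\<Sum>k=1..n. ennreal (Z k \<omega>) * indicator (B k) \<omega>)"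
        using k0n by (intro member_le_sum) auto
      finally have "ennreal (exp (- \<theta>)) * ennreal (exp \<theta>) \<le> ennreal (exp (- \<theta>)) * (\<Sum>k=1..n. ennreal (Z k \<omega>) * indicator (B k) \<omega>)"
        by (rule mult_left_mono) simp
      moreover have "ennreal (exp (- \<theta>)) * ennreal (exp \<theta>) = 1"
        by (simp add: ennreal_mult[symmetric] exp_add[symmetric])
      ultimately show ?thesis using True by simp
    qed
    have "emeasure M E0 = (\<integral>\<^sup>+\<omega>. indicator E0 \<omega> \<partial>M)" using True by simp
    also have "\<dots> \<le> (\<integral>\<^sup>+\<omega>. ennreal (exp (- \<theta>)) * (\<Sum>k=1..n. ennreal (Z k \<omega>) * indicator (B k) \<omega>) \<partial>M)"
      using pw by (intro nn_integral_mono) auto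
    also have "\<dots> = ennreal (exp (- \<theta>)) * (\<integral>\<^sup>+\<omega>. (\<Sum>k=1..n. ennreal (Z k \<omega>) * indicator (B k) \<omega>) \<partial>M)"
      using msum by (rule nn_integral_cmult)
    also have "(\<integral>\<^sup>+\<omega>. (\<Sum>k=1..n. ennreal (Z k \<omega>) * indicator (B k) \<omega>) \<partial>M)
        = (\<Sum>k=1..n. \<integral>\<^sup>+\<omega>. ennreal (Z k \<omega>) * indicator (B k) \<omega> \<partial>M)"
      using mterm by (rule nn_integral_sum) auto
    also have "ennreal (exp (- \<theta>)) * \<dots> \<le> ennreal (exp (- \<theta>)) * 1"
      using sumle by (rule mult_left_mono) simp
    finally have "ennreal (measure M E0) \<le> ennreal (exp (- \<theta>))"
      by (simp add: P.emeasure_eq_measure)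
    thus ?thesis by (simp add: ennreal_le_iff)
  qed
  define T where "T = (x/v) powr (\<beta>/(\<beta>-1))"
  have T0: "0 \<le> T" unfolding T_def by simp
  have th: "\<theta> = (1 - 1/\<beta>) * T"
    unfolding \<theta>_def c_def l_def T_def using theta_calc[OF beta(1) xpos vpos] by simp
  have "C_const \<beta> * T \<le> (1 - 1/\<beta>) * T" using C_le[OF beta(1)] T0 by (rule mult_right_mono)
  hence "exp (- \<theta>) \<le> exp (- C_const \<beta> * T)" unfolding th by simp
  with bound have "measure M E0 \<le> exp (- C_const \<beta> * T)" by (rule order_trans)
  thus ?thesis unfolding E0_def T_def .
qed
end
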